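(* Let $\pi\ge1$ and $c:=\sup_{g\in\mathcal G}\dfrac{g'(0)}{g(\hat v_g)/\hat v_g}$, where $\hat v_g$ is the smallest maximizer of $g$ over $[0,\Delta]$. For every input $\sigma=(g_1,\dots,g_T)\in\Sigma$ and every $t\in[T]$, the output of CR-Pursuit($\pi$) satisfies $$\bar v_t\le c\,\frac{g_t(\bar v_t)}{p(t)},\qquad p(t)=g_t'(0).$$
   Context: Fix $\Delta>0$ and $0<m\le M$. Let $\mathcal G$ be the family of all functions $g:[0,\Delta]\to\mathbb{R}$ that are concave, increasing and differentiable on $[0,\Delta]$ with $g(0)=0$ and $g'(0)\in[m,M]$. An input is a finite sequence $\sigma=(g_1,\dots,g_T)$, $T\ge1$, $g_t\in\mathcal G$; $\Sigma$ is the set of all inputs; $\sigma^{[1:t]}=(g_1,\dots,g_t)$ ($\sigma^{[1:0]}$ empty). $\eta_{OPT}(\sigma^{[1:t]})$ is the optimal value of $\max\sum_{s=1}^t g_s(v_s)$ s.t. $\sum_{s=1}^t v_s\le\Delta$, $v_s\ge0$ (and $0$ for the empty sequence). For $\pi\ge1$, CR-Pursuit($\pi$) outputs at time $t$ the smallest $\bar v_t\in[0,\Delta]$ with $g_t(\bar v_t)=\frac1\pi\big[\eta_{OPT}(\sigma^{[1:t]})-\eta_{OPT}(\sigma^{[1:t-1]})\big]$. *)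

theory Defs
  imports "HOL-Analysis.Analysis"
begin

definition dg0 :: "real \<Rightarrow> (real \<Rightarrow> real) \<Rightarrow> real" where
  "dg0 \<Delta> g = (THE d. (g has_real_derivative d) (at 0 within {0..\<Delta>}))"

definition inG :: "real \<Rightarrow> real \<Rightarrow> real \<Rightarrow> (real \<Rightarrow> real) \<Rightarrow> bool" where
  "inG \<Delta> m M g \<longleftrightarrow>
     concave_on {0..\<Delta>} g \<and> mono_on {0..\<Delta>} g \<and> g differentiable_on {0..\<Delta>} \<and>
     g 0 = 0 \<and> dg0 \<Delta> g \<in> {m..M}"

definition vhat :: "real \<Rightarrow> (real \<Rightarrow> real) \<Rightarrow> real" where
  "vhat \<Delta> g = (LEAST v. v \<in> {0..\<Delta>} \<and> (\<forall>u\<in>{0..\<Delta>}. g u \<le> g v))"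

definition eta_opt :: "real \<Rightarrow> (real \<Rightarrow> real) list \<Rightarrow> real" where
  "eta_opt \<Delta> gs = Sup {(\<Sum>s<length gs. (gs ! s) (v s)) | v.
       (\<forall>s<length gs. 0 \<le> v s) \<and> (\<Sum>s<length gs. v s) \<le> \<Delta>}"

text \<open>Output of CR-Pursuit(pi) at (1-based) time t on input gs.\<close>
definition cr_pursuit :: "real \<Rightarrow> real \<Rightarrow> (real \<Rightarrow> real) list \<Rightarrow> nat \<Rightarrow> real" where
  "cr_pursuit \<Delta> \<pi> gs t = (LEAST v. v \<in> {0..\<Delta>} \<and>
      (gs ! (t - 1)) v = (1 / \<pi>) * (eta_opt \<Delta> (take t gs) - eta_opt \<Delta> (take (t - 1) gs)))"

text \<open>The constant c (possibly infinite, hence extended real).\<close>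
definition c_const :: "real \<Rightarrow> real \<Rightarrow> real \<Rightarrow> ereal" where
  "c_const \<Delta> m M = (SUP g \<in> {g. inG \<Delta> m M g}. ereal (dg0 \<Delta> g / (g (vhat \<Delta> g) / vhat \<Delta> g)))"

end

theory Submission
  imports Defs
begin

lemma least_closed:
  fixes P :: "real \<Rightarrow> bool"
  assumes "closed {x. P x}" "P a" "\<And>x. P x \<Longrightarrow> b \<le> x"
  shows "P (LEAST x. P x) \<and> (\<forall>y. P y \<longrightarrow> (LEAST x. P x) \<le> y)"
proof -
  let ?S = "{x. P x}"
  have ne: "?S \<noteq> {}" using assms(2) by blast
  have bb: "bdd_below ?S" using assms(3) by (auto simp: bdd_below_def)
  have I: "Inf ?S \<in> ?S" using closed_contains_Inf[OF ne bb assms(1)] .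
  have L: "(LEAST x. P x) = Inf ?S"
    by (rule Least_equality) (use I bb in \<open>auto intro: cInf_lower\<close>)
  show ?thesis using I bb by (auto simp: L intro: cInf_lower)
qed

lemma eta_bdd:
  fixes gs :: "(real \<Rightarrow> real) list"
  assumes "\<forall>g\<in>set gs. inG \<Delta> m M g" "\<Delta> > 0" "n \<le> length gs"
  shows "bdd_above {(\<Sum>s<length (take n gs). (take n gs ! s) (v s)) | v.
       (\<forall>s<length (take n gs). 0 \<le> v s) \<and> (\<Sum>s<length (take n gs). v s) \<le> \<Delta>}"
    and "{(\<Sum>s<length (take n gs). (take n gs ! s) (v s)) | v.
       (\<forall>s<length (take n gs). 0 \<le> v s) \<and> (\<Sum>s<length (take n gs). v s) \<le> \<Delta>} \<noteq> {}"
proof -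
  have mono: "\<And>s x. s < n \<Longrightarrow> 0 \<le> x \<Longrightarrow> x \<le> \<Delta> \<Longrightarrow> (gs ! s) x \<le> (gs ! s) \<Delta>"
  proof -
    fix s x assume "s < n" "0 \<le> x" "x \<le> \<Delta>"
    then have "inG \<Delta> m M (gs ! s)" using assms by auto
    then show "(gs ! s) x \<le> (gs ! s) \<Delta>" using \<open>0 \<le> x\<close> \<open>x \<le> \<Delta>\<close> assms(2)
      by (auto simp: inG_def mono_on_def)
  qed
  show "bdd_above {(\<Sum>s<length (take n gs). (take n gs ! s) (v s)) | v.
       (\<forall>s<length (take n gs). 0 \<le> v s) \<and> (\<Sum>s<length (take n gs). v s) \<le> \<Delta>}"
    unfolding bdd_above_def
  proof (intro exI[of _ "\<Sum>s<n. (gs ! s) \<Delta>"] ballI)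
    fix x assume "x \<in> {(\<Sum>s<length (take n gs). (take n gs ! s) (v s)) | v.
       (\<forall>s<length (take n gs). 0 \<le> v s) \<and> (\<Sum>s<length (take n gs). v s) \<le> \<Delta>}"
    then obtain v where x0: "x = (\<Sum>s<length (take n gs). (take n gs ! s) (v s))"
      and nn0: "\<forall>s<length (take n gs). 0 \<le> v s"
      and sm0: "(\<Sum>s<length (take n gs). v s) \<le> \<Delta>" by blast
    have ln: "length (take n gs) = n" using assms(3) by simp
    have nn: "\<forall>s<n. 0 \<le> v s" using nn0 ln by simp
    have sm: "(\<Sum>s<n. v s) \<le> \<Delta>" using sm0 ln by simp
    have x: "x = (\<Sum>s<n. (gs ! s) (v s))" unfolding x0 ln by (rule sum.cong) auto
    have "\<And>s. s < n \<Longrightarrow> v s \<le> \<Delta>"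
    proof -
      fix s assume "s < n"
      have "v s \<le> (\<Sum>s<n. v s)" by (rule member_le_sum) (use \<open>s<n\<close> nn in auto)
      then show "v s \<le> \<Delta>" using sm by linarith
    qed
    then show "x \<le> (\<Sum>s<n. (gs ! s) \<Delta>)" unfolding x
      by (intro sum_mono) (use nn mono in auto)
  qed
  show "{(\<Sum>s<length (take n gs). (take n gs ! s) (v s)) | v.
       (\<forall>s<length (take n gs). 0 \<le> v s) \<and> (\<Sum>s<length (take n gs). v s) \<le> \<Delta>} \<noteq> {}"
    using assms(2) by (auto intro!: exI[of _ "\<lambda>_. 0"])
qed

lemma eta_set_eq:
  fixes gs :: "(real \<Rightarrow> real) list"
  assumes "n \<le> length gs"
  shows "{(\<Sum>s<length (take n gs). (take n gs ! s) (v s)) | v.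
       (\<forall>s<length (take n gs). 0 \<le> v s) \<and> (\<Sum>s<length (take n gs). v s) \<le> \<Delta>}
    = {(\<Sum>s<n. (gs ! s) (v s)) | v. (\<forall>s<n. 0 \<le> v s) \<and> (\<Sum>s<n. v s) \<le> \<Delta>}"
proof -
  have ln: "length (take n gs) = n" using assms by simp
  have "\<And>v. (\<Sum>s<n. (take n gs ! s) (v s)) = (\<Sum>s<n. (gs ! s) (v s))"
    by (rule sum.cong) auto
  then show ?thesis unfolding ln by simp
qed

theorem lemma9:
  fixes \<Delta> m M \<pi> :: real and gs :: "(real \<Rightarrow> real) list" and t :: nat
  assumes "\<Delta> > 0" and "0 < m" and "m \<le> M" and "\<pi> \<ge> 1"
    and "gs \<noteq> []" and "\<forall>g\<in>set gs. inG \<Delta> m M g"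
    and "1 \<le> t" and "t \<le> length gs"
  shows "ereal (cr_pursuit \<Delta> \<pi> gs t)
           \<le> c_const \<Delta> m M * ereal ((gs ! (t - 1)) (cr_pursuit \<Delta> \<pi> gs t) / dg0 \<Delta> (gs ! (t - 1)))"
proof -
  define g where "g = gs ! (t - 1)"
  have gG: "inG \<Delta> m M g" using assms(6-8) unfolding g_def by auto
  have cont: "continuous_on {0..\<Delta>} g" using gG
    by (auto simp: inG_def intro: differentiable_imp_continuous_on)
  have gmono: "\<And>x y. 0 \<le> x \<Longrightarrow> x \<le> y \<Longrightarrow> y \<le> \<Delta> \<Longrightarrow> g x \<le> g y"
    using gG by (auto simp: inG_def mono_on_def)
  have g0: "g 0 = 0" using gG by (auto simp: inG_def)
  have p: "dg0 \<Delta> g \<ge> m" using gG by (auto simp: inG_def)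
  define d where "d = eta_opt \<Delta> (take t gs) - eta_opt \<Delta> (take (t - 1) gs)"
  obtain k where tk: "t = Suc k" using assms(7) by (cases t) auto
  have kl: "k < length gs" using tk assms(8) by simp
  define A where "A n = {(\<Sum>s<n. (gs ! s) (v s)) | v. (\<forall>s<n. 0 \<le> v s) \<and> (\<Sum>s<n. v s) \<le> \<Delta>}" for n
  have etaA: "eta_opt \<Delta> (take n gs) = Sup (A n)" if "n \<le> length gs" for n
    unfolding eta_opt_def A_def eta_set_eq[OF that] ..
  have bddA: "bdd_above (A n)" "A n \<noteq> {}" if "n \<le> length gs" for n
    using eta_bdd[OF assms(6) assms(1) that] unfolding A_def eta_set_eq[OF that] by auto
  have gk: "gs ! k = g" unfolding g_def tk by simp
  have up: "Sup (A (Suc k)) \<le> Sup (A k) + g \<Delta>"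
  proof (rule cSup_least)
    show "A (Suc k) \<noteq> {}" using bddA kl by simp
    fix x assume "x \<in> A (Suc k)"
    then obtain v where x: "x = (\<Sum>s<Suc k. (gs ! s) (v s))" and nn: "\<forall>s<Suc k. 0 \<le> v s"
      and sm: "(\<Sum>s<Suc k. v s) \<le> \<Delta>" unfolding A_def by blast
    have "(\<Sum>s<k. v s) \<le> (\<Sum>s<Suc k. v s)" using nn by (simp)
    then have "(\<Sum>s<k. (gs ! s) (v s)) \<in> A k" using nn sm unfolding A_def by force
    then have 1: "(\<Sum>s<k. (gs ! s) (v s)) \<le> Sup (A k)" using bddA kl by (intro cSup_upper) auto
    have "v k \<le> (\<Sum>s<Suc k. v s)" by (rule member_le_sum) (use nn in auto)
    then have 2: "g (v k) \<le> g \<Delta>" using gmono nn sm by auto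
    show "x \<le> Sup (A k) + g \<Delta>" using 1 2 gk x by simp
  qed
  have lo: "Sup (A k) \<le> Sup (A (Suc k))"
  proof (rule cSup_least)
    show "A k \<noteq> {}" using bddA kl by simp
    fix x assume "x \<in> A k"
    then obtain v where x: "x = (\<Sum>s<k. (gs ! s) (v s))" and nn: "\<forall>s<k. 0 \<le> v s"
      and sm: "(\<Sum>s<k. v s) \<le> \<Delta>" unfolding A_def by blast
    define w where "w = v(k := 0)"
    have e1: "(\<Sum>s<k. (gs ! s) (w s)) = x" unfolding x w_def by (rule sum.cong) auto
    have e2: "(\<Sum>s<k. w s) = (\<Sum>s<k. v s)" unfolding w_def by (rule sum.cong) auto
    have "(\<Sum>s<Suc k. (gs ! s) (w s)) = x" using e1 gk g0 by (simp add: w_def)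
    moreover have "\<forall>s<Suc k. 0 \<le> w s" using nn by (auto simp: w_def less_Suc_eq)
    moreover have "(\<Sum>s<Suc k. w s) \<le> \<Delta>" using e2 sm by (simp add: w_def)
    ultimately have "x \<in> A (Suc k)" unfolding A_def by force
    then show "x \<le> Sup (A (Suc k))" using bddA kl by (intro cSup_upper) auto
  qed
  have d_bounds: "0 \<le> d \<and> d \<le> g \<Delta>"
    unfolding d_def using etaA[of k] etaA[of "Suc k"] kl up lo tk by simp
  define \<tau> where "\<tau> = (1 / \<pi>) * d"
  have tau: "0 \<le> \<tau>" "\<tau> \<le> g \<Delta>"
  proof -
    show "0 \<le> \<tau>" using d_bounds assms(4) by (simp add: \<tau>_def)
    have "d \<le> \<pi> * d" using mult_right_mono[of 1 \<pi> d] d_bounds assms(4) by simp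
    then have "\<tau> \<le> d" using d_bounds assms(4) unfolding \<tau>_def
      by (simp add: field_simps)
    then show "\<tau> \<le> g \<Delta>" using d_bounds by linarith
  qed
  define v where "v = cr_pursuit \<Delta> \<pi> gs t"
  have vdef: "v = (LEAST v. v \<in> {0..\<Delta>} \<and> g v = \<tau>)"
    unfolding v_def cr_pursuit_def g_def \<tau>_def d_def by simp
  obtain x0 where x0: "x0 \<in> {0..\<Delta>}" "g x0 = \<tau>"
    using IVT'[of g 0 \<tau> \<Delta>] tau g0 cont assms(1) by auto
  have cl1: "closed {v. v \<in> {0..\<Delta>} \<and> g v = \<tau>}"
  proof -
    have "{v. v \<in> {0..\<Delta>} \<and> g v = \<tau>} = {0..\<Delta>} \<inter> g -` {\<tau>}" by auto
    then show ?thesis using continuous_closed_preimage[OF cont] by simp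
  qed
  have vprops: "v \<in> {0..\<Delta>} \<and> g v = \<tau> \<and> (\<forall>y. y \<in> {0..\<Delta>} \<and> g y = \<tau> \<longrightarrow> v \<le> y)"
  proof -
    have "(\<lambda>v. v \<in> {0..\<Delta>} \<and> g v = \<tau>) (LEAST v. v \<in> {0..\<Delta>} \<and> g v = \<tau>) \<and>
      (\<forall>y. (\<lambda>v. v \<in> {0..\<Delta>} \<and> g v = \<tau>) y \<longrightarrow> (LEAST v. v \<in> {0..\<Delta>} \<and> g v = \<tau>) \<le> y)"
      by (rule least_closed[where P="\<lambda>v. v \<in> {0..\<Delta>} \<and> g v = \<tau>" and a=x0 and b=0])
        (use cl1 x0 in auto)
    then show ?thesis unfolding vdef[symmetric] by blast
  qed
  define vh where "vh = vhat \<Delta> g"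
  have cl2: "closed {v. v \<in> {0..\<Delta>} \<and> (\<forall>u\<in>{0..\<Delta>}. g u \<le> g v)}"
  proof -
    have "{v. v \<in> {0..\<Delta>} \<and> (\<forall>u\<in>{0..\<Delta>}. g u \<le> g v)} = {0..\<Delta>} \<inter> g -` {g \<Delta>..}"
    proof -
      have gmax: "\<And>u. u \<in> {0..\<Delta>} \<Longrightarrow> g u \<le> g \<Delta>" using gmono by auto
      show ?thesis
      proof (intro set_eqI iffI)
        fix x assume "x \<in> {v. v \<in> {0..\<Delta>} \<and> (\<forall>u\<in>{0..\<Delta>}. g u \<le> g v)}"
        then show "x \<in> {0..\<Delta>} \<inter> g -` {g \<Delta>..}" using assms(1) by auto
      next
        fix x assume x: "x \<in> {0..\<Delta>} \<inter> g -` {g \<Delta>..}"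
        have "\<forall>u\<in>{0..\<Delta>}. g u \<le> g x"
        proof
          fix u assume "u \<in> {0..\<Delta>}"
          then have "g u \<le> g \<Delta>" by (rule gmax)
          then show "g u \<le> g x" using x by simp
        qed
        then show "x \<in> {v. v \<in> {0..\<Delta>} \<and> (\<forall>u\<in>{0..\<Delta>}. g u \<le> g v)}" using x by simp
      qed
    qed
    then show ?thesis using continuous_closed_preimage[OF cont] by simp
  qed
  have vhprops: "vh \<in> {0..\<Delta>} \<and> (\<forall>u\<in>{0..\<Delta>}. g u \<le> g vh) \<and>
       (\<forall>y. y \<in> {0..\<Delta>} \<and> (\<forall>u\<in>{0..\<Delta>}. g u \<le> g y) \<longrightarrow> vh \<le> y)"
  proof -
    let ?P = "\<lambda>v. v \<in> {0..\<Delta>} \<and> (\<forall>u\<in>{0..\<Delta>}. g u \<le> g v)"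
    have "?P (LEAST v. ?P v) \<and> (\<forall>y. ?P y \<longrightarrow> (LEAST v. ?P v) \<le> y)"
      by (rule least_closed[where P="?P" and a=\<Delta> and b=0])
        (use cl2 assms(1) gmono in auto)
    then show ?thesis unfolding vh_def vhat_def by blast
  qed
  have v_le: "v \<le> vh"
  proof (rule ccontr)
    assume "\<not> v \<le> vh"
    then have "g vh \<le> g v" using gmono vhprops vprops by auto
    moreover have "g v \<le> g vh" using vhprops vprops by auto
    ultimately have "g vh = \<tau>" using vprops by auto
    then have "v \<le> vh" using vprops vhprops by auto
    then show False using \<open>\<not> v \<le> vh\<close> by simp
  qed
  have gv: "g v = \<tau>" using vprops by auto
  have c_ge: "ereal (dg0 \<Delta> g / (g vh / vh)) \<le> c_const \<Delta> m M"
    unfolding c_const_def vh_def using gG by (intro SUP_upper) auto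
  show ?thesis
  proof (cases "v = 0")
    case True
    then have "ereal v \<le> c_const \<Delta> m M * ereal (g v / dg0 \<Delta> g)" using g0 by (simp add: zero_ereal_def[symmetric])
    then show ?thesis by (simp add: v_def g_def)
  next
    case False
    then have vpos: "v > 0" using vprops by auto
    have taupos: "\<tau> > 0"
    proof (rule ccontr)
      assume "\<not> \<tau> > 0"
      then have "\<tau> = 0" using tau by simp
      then have "v \<le> 0" using vprops g0 assms(1) by auto
      then show False using vpos by simp
    qed
    have vhpos: "vh > 0" using v_le vpos by simp
    have gvh: "g vh \<ge> g v" using vhprops vprops by auto
    have gvhpos: "g vh > 0" using gvh gv taupos by simp
    have conc: "(v / vh) * g vh \<le> g v"
    proof -
      have cv: "convex_on {0..\<Delta>} (\<lambda>x. - g x)" using gG by (simp add: inG_def concave_on_def)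
      have h: "\<forall>x\<in>{0..\<Delta>}. \<forall>y\<in>{0..\<Delta>}. \<forall>u\<ge>0. \<forall>w\<ge>0. u + w = 1 \<longrightarrow>
          - g (u *\<^sub>R x + w *\<^sub>R y) \<le> u * (- g x) + w * (- g y)"
        using cv unfolding convex_on_def by blast
      have vh1: "vh \<in> {0..\<Delta>}" using vhprops by blast
      have z: "(0::real) \<in> {0..\<Delta>}" using assms(1) by simp
      have u0: "0 \<le> v / vh" using vpos vhpos by simp
      have w0: "0 \<le> 1 - v / vh" using v_le vhpos by simp
      have "- g ((v/vh) *\<^sub>R vh + (1 - v/vh) *\<^sub>R 0) \<le> (v/vh) * (- g vh) + (1 - v/vh) * (- g 0)"
        using h[rule_format, OF vh1 z u0 w0] by simp
      moreover have "(v/vh) *\<^sub>R vh + (1 - v/vh) *\<^sub>R 0 = v" using vhpos by simp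
      ultimately show ?thesis using g0 by simp
    qed
    have key: "v \<le> vh * g v / g vh"
      using conc gvhpos vhpos by (simp add: field_simps)
    have pp: "dg0 \<Delta> g > 0" using p assms(2) by simp
    have "ereal v \<le> ereal (dg0 \<Delta> g / (g vh / vh)) * ereal (g v / dg0 \<Delta> g)"
      using key pp gvhpos by (simp add: field_simps)
    also have "\<dots> \<le> c_const \<Delta> m M * ereal (g v / dg0 \<Delta> g)"
      by (rule ereal_mult_right_mono[OF c_ge]) (use gv taupos pp in simp)
    finally show ?thesis by (simp add: v_def g_def)
  qed
qed

end
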